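(* For integers $t\ge 1$ and $m>t$ (with $m$ sufficiently large) and a fixed integer constant $c\ge 3$, there exists a binary $t$-break-resilient code $\mathcal{C}\subseteq\{0,1\}^n$ of length $n=m+(6+2\log\log m)\cdot 3c\log m\cdot t+c\log m$ with $\log|\mathcal{C}|\ge m-o(1)$; consequently its redundancy satisfies $n-\log|\mathcal{C}|=O(t\log n\log\log n)$.
   Context: Logarithms are base 2. Breaking a binary string $\mathbf{x}\in\{0,1\}^n$ at $s\le t$ positions means choosing $s$ cut points between consecutive entries, producing $s+1$ consecutive substrings called fragments; fragments are oriented (read left to right as in $\mathbf{x}$) but given to the decoder as an unordered multiset. A code $\mathcal{C}\subseteq\{0,1\}^n$ is a $t$-break-resilient code ($t$-BRC) if every codeword can be uniquely recovered from the unordered multiset of fragments resulting from any at most $t$ breaks (equivalently, no two distinct codewords, each broken at at most $t$ positions, yield the same fragment multiset). The redundancy of $\mathcal{C}$ is $n-\log|\mathcal{C}|$. *)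

theory Defs
  imports "HOL-Library.Multiset" Complex_Main
begin

text \<open>Fragments of a binary string x broken at the cut set S (a set of positions in
  {1..<length x}; a cut at position i lies between entries i-1 and i, 0-indexed).\<close>
definition fragments :: "bool list \<Rightarrow> nat set \<Rightarrow> bool list multiset" where
  "fragments x S =
     (let cs = sorted_list_of_set S
      in mset (map (\<lambda>(a, b). take (b - a) (drop a x))
                   (zip (0 # cs) (cs @ [length x]))))"

definition valid_breaks :: "nat \<Rightarrow> bool list \<Rightarrow> nat set \<Rightarrow> bool" where
  "valid_breaks t x S \<longleftrightarrow> S \<subseteq> {1..<length x} \<and> card S \<le> t"

definition break_resilient :: "nat \<Rightarrow> bool list set \<Rightarrow> bool" where
  "break_resilient t C \<longleftrightarrow>
     (\<forall>x\<in>C. \<forall>y\<in>C. \<forall>S T. valid_breaks t x S \<and> valid_breaks t y T \<and>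
        fragments x S = fragments y T \<longrightarrow> x = y)"

definition code_length :: "nat \<Rightarrow> nat \<Rightarrow> nat \<Rightarrow> nat" where
  "code_length c t m =
     nat \<lceil>real m + (6 + 2 * log 2 (log 2 (real m))) * (3 * real c * log 2 (real m)) * real t
           + real c * log 2 (real m)\<rceil>"

end

theory Submission
  imports Defs
begin

definition FL :: "bool list \<Rightarrow> nat set \<Rightarrow> bool list list" where
  "FL x S = (let cs = sorted_list_of_set S
      in map (\<lambda>(a, b). take (b - a) (drop a x)) (zip (0 # cs) (cs @ [length x])))"

lemma fragments_FL: "fragments x S = mset (FL x S)"
  by (simp add: fragments_def FL_def Let_def)

lemma concat_aux:
  "sorted cs \<Longrightarrow> \<forall>c\<in>set cs. c \<le> length x \<Longrightarrow> \<forall>c\<in>set cs. a \<le> c \<Longrightarrow> a \<le> length x \<Longrightarrow>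
   concat (map (\<lambda>(a, b). take (b - a) (drop a x)) (zip (a # cs) (cs @ [length x]))) = drop a x"
proof (induction cs arbitrary: a)
  case Nil
  then show ?case by simp
next
  case (Cons c cs)
  have "concat (map (\<lambda>(a, b). take (b - a) (drop a x)) (zip (c # cs) (cs @ [length x]))) = drop c x"
    using Cons by auto
  moreover have "take (c - a) (drop a x) @ drop c x = drop a x"
  proof -
    have "drop (c - a) (drop a x) = drop c x" using Cons.prems(3) by simp
    then show ?thesis by (metis append_take_drop_id)
  qed
  ultimately show ?case by simp
qed

lemma concat_FL:
  assumes "S \<subseteq> {1..<length x}"
  shows "concat (FL x S) = x"
proof -
  have fin: "finite S" using assms finite_subset by blast
  have "concat (FL x S) = drop 0 x"
    unfolding FL_def Let_def
    by (rule concat_aux) (use assms fin in auto)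
  then show ?thesis by simp
qed

lemma length_FL:
  assumes "S \<subseteq> {1..<length x}"
  shows "length (FL x S) = card S + 1"
  by (simp add: FL_def Let_def)

definition Sub :: "bool list \<Rightarrow> bool list set" where
  "Sub x = (\<lambda>(a, k). take k (drop a x)) ` ({..length x} \<times> {..length x})"

lemma Sub_mem: "take k (drop a x) \<in> Sub x"
proof -
  have "take k (drop a x) = take (min k (length x)) (drop (min a (length x)) x)"
    by (simp add: min_def)
  then show ?thesis unfolding Sub_def by force
qed

lemma card_Sub: "card (Sub x) \<le> (length x + 1)^2"
proof -
  have "card (Sub x) \<le> card ({..length x} \<times> {..length x})"
    unfolding Sub_def by (rule card_image_le) simp
  then show ?thesis by (simp add: power2_eq_square)
qed

lemma FL_Sub: "set (FL x S) \<subseteq> Sub x"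
  unfolding FL_def Let_def using Sub_mem by auto

definition conf :: "nat \<Rightarrow> bool list \<Rightarrow> bool list \<Rightarrow> bool" where
  "conf t x y \<longleftrightarrow> (\<exists>S T. valid_breaks t x S \<and> valid_breaks t y T \<and> fragments x S = fragments y T)"

lemma conf_nbrs:
  "{y. length y = n \<and> conf t x y} \<subseteq> concat ` {L. set L \<subseteq> Sub x \<and> length L = t + 1}"
proof
  fix y assume "y \<in> {y. length y = n \<and> conf t x y}"
  then obtain S T where S: "valid_breaks t x S" and T: "valid_breaks t y T"
    and eq: "fragments x S = fragments y T" by (auto simp: conf_def)
  have "set (FL y T) = set (FL x S)" using eq
    by (metis fragments_FL set_mset_mset)
  hence s1: "set (FL y T) \<subseteq> Sub x" using FL_Sub by blast
  have l1: "length (FL y T) \<le> t + 1" using T length_FL by (simp add: valid_breaks_def)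
  define L where "L = FL y T @ replicate (t + 1 - length (FL y T)) []"
  have "concat L = y" using concat_FL T by (simp add: L_def valid_breaks_def)
  moreover have "set L \<subseteq> Sub x" using s1 Sub_mem[of 0 0 x] by (auto simp: L_def)
  moreover have "length L = t + 1" using l1 by (simp add: L_def)
  ultimately show "y \<in> concat ` {L. set L \<subseteq> Sub x \<and> length L = t + 1}" by blast
qed

lemma card_conf_nbrs:
  "card {y. length y = n \<and> conf t x y} \<le> (length x + 1) ^ (2 * (t + 1))"
proof -
  have fS: "finite (Sub x)" unfolding Sub_def by simp
  have "card {y. length y = n \<and> conf t x y} \<le> card (concat ` {L. set L \<subseteq> Sub x \<and> length L = t + 1})"
    by (rule card_mono[OF _ conf_nbrs]) (simp add: finite_lists_length_eq[OF fS])
  also have "\<dots> \<le> card {L. set L \<subseteq> Sub x \<and> length L = t + 1}"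
    by (rule card_image_le) (simp add: finite_lists_length_eq[OF fS])
  also have "\<dots> = card (Sub x) ^ (t + 1)" by (rule card_lists_length_eq[OF fS])
  also have "\<dots> \<le> ((length x + 1)^2) ^ (t + 1)" by (rule power_mono[OF card_Sub]) simp
  finally show ?thesis by (simp only: power_mult)
qed

lemma greedy:
  assumes "finite U" "\<forall>x\<in>U. R x x" "\<forall>x y. R x y \<longrightarrow> R y x"
    "\<forall>x\<in>U. card {y\<in>U. R x y} \<le> D"
  shows "\<exists>C\<subseteq>U. (\<forall>x\<in>C. \<forall>y\<in>C. R x y \<longrightarrow> x = y) \<and> card U \<le> D * card C"
  using assms
proof (induction "card U" arbitrary: U rule: less_induct)
  case less
  show ?case
  proof (cases "U = {}")
    case True
    then show ?thesis by auto
  next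
    case False
    then obtain x where x: "x \<in> U" by blast
    define N where "N = {y\<in>U. R x y}"
    define U' where "U' = U - N"
    have xN: "x \<in> N" using x less.prems(2) by (simp add: N_def)
    have NU: "N \<subseteq> U" by (auto simp: N_def)
    have fU': "finite U'" using less.prems(1) by (simp add: U'_def)
    have lt: "card U' < card U" unfolding U'_def
      using xN NU less.prems(1) x by (intro psubset_card_mono) auto
    have "\<forall>z\<in>U'. card {y\<in>U'. R z y} \<le> D"
    proof
      fix z assume z: "z \<in> U'"
      have "card {y\<in>U'. R z y} \<le> card {y\<in>U. R z y}"
        by (rule card_mono) (use less.prems(1) in \<open>auto simp: U'_def\<close>)
      then show "card {y\<in>U'. R z y} \<le> D" using less.prems(4) z by (auto simp: U'_def)
    qed
    then obtain C' where C': "C' \<subseteq> U'" "\<forall>a\<in>C'. \<forall>b\<in>C'. R a b \<longrightarrow> a = b" "card U' \<le> D * card C'"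
      using less.hyps[OF lt fU'] less.prems by (auto simp: U'_def)
    have xC': "x \<notin> C'" using C'(1) xN by (auto simp: U'_def)
    have fC': "finite C'" using C'(1) fU' finite_subset by blast
    have cU: "card U = card U' + card N"
      unfolding U'_def using card_Diff_subset[OF finite_subset[OF NU less.prems(1)] NU]
        card_mono[OF less.prems(1) NU] by simp
    have "card N \<le> D" using less.prems(4) x by (simp add: N_def)
    hence "card U \<le> D * card (insert x C')" using cU C'(3) xC' fC' by simp
    moreover have "insert x C' \<subseteq> U" using C'(1) x by (auto simp: U'_def)
    moreover have "\<forall>a\<in>insert x C'. \<forall>b\<in>insert x C'. R a b \<longrightarrow> a = b"
    proof (intro ballI impI)
      fix a b assume a: "a \<in> insert x C'" and b: "b \<in> insert x C'" and r: "R a b"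
      have nx: "\<And>w. w \<in> C' \<Longrightarrow> \<not> R x w" using C'(1) by (auto simp: U'_def N_def)
      show "a = b"
      proof (cases "a = x")
        case True
        then show ?thesis using b r nx by auto
      next
        case False
        hence aC: "a \<in> C'" using a by auto
        show ?thesis
        proof (cases "b = x")
          case True
          then show ?thesis using r less.prems(3) nx aC by blast
        next
          case False
          then show ?thesis using aC b r C'(2) by auto
        qed
      qed
    qed
    ultimately show ?thesis by blast
  qed
qed


lemma exists_code:
  "\<exists>C\<subseteq>{x. length x = n}. break_resilient t C \<and> 2 ^ n \<le> (n + 1) ^ (2 * (t + 1)) * card C"
proof -
  let ?U = "{x::bool list. length x = n}"
  have fU: "finite ?U" using finite_lists_length_eq[of "UNIV::bool set" n] by simp
  have cU: "card ?U = 2 ^ n" using card_lists_length_eq[of "UNIV::bool set" n] by simp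
  have refl: "\<forall>x\<in>?U. conf t x x"
    by (auto simp: conf_def valid_breaks_def intro!: exI[of _ "{}"])
  have sym: "\<forall>x y. conf t x y \<longrightarrow> conf t y x" unfolding conf_def by metis
  have deg: "\<forall>x\<in>?U. card {y\<in>?U. conf t x y} \<le> (n + 1) ^ (2 * (t + 1))"
  proof
    fix x assume "x \<in> ?U"
    then show "card {y\<in>?U. conf t x y} \<le> (n + 1) ^ (2 * (t + 1))"
      using card_conf_nbrs[of n t x] by simp
  qed
  obtain C where C: "C \<subseteq> ?U" "\<forall>x\<in>C. \<forall>y\<in>C. conf t x y \<longrightarrow> x = y"
    "card ?U \<le> (n + 1) ^ (2 * (t + 1)) * card C"
    using greedy[OF fU refl sym deg] by blast
  have br: "break_resilient t C" unfolding break_resilient_def using C(2) unfolding conf_def by blast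
  have "2 ^ n \<le> (n + 1) ^ (2 * (t + 1)) * card C" using C(3) cU by simp
  then show ?thesis using C(1) br by blast
qed

theorem corollary1:
  fixes c :: nat
  assumes "c \<ge> 3"
  shows "\<exists>K::real. K > 0 \<and>
    (\<forall>t::nat. t \<ge> 1 \<longrightarrow>
      (\<exists>\<epsilon>::nat \<Rightarrow> real. \<epsilon> \<longlonglongrightarrow> 0 \<and>
        (\<exists>M::nat. \<forall>m. m \<ge> M \<and> m > t \<longrightarrow>
          (\<exists>C::bool list set.
             C \<subseteq> {x. length x = code_length c t m} \<and>
             break_resilient t C \<and>
             log 2 (real (card C)) \<ge> real m - \<epsilon> m \<and>
             real (code_length c t m) - log 2 (real (card C))
               \<le> K * real t * log 2 (real (code_length c t m))
                   * log 2 (log 2 (real (code_length c t m)))))))"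
proof (intro exI[of _ 8] conjI allI impI)
  fix t :: nat assume t1: "t \<ge> 1"
  show "\<exists>\<epsilon>::nat \<Rightarrow> real. \<epsilon> \<longlonglongrightarrow> 0 \<and>
        (\<exists>M::nat. \<forall>m. m \<ge> M \<and> m > t \<longrightarrow>
          (\<exists>C::bool list set.
             C \<subseteq> {x. length x = code_length c t m} \<and>
             break_resilient t C \<and>
             log 2 (real (card C)) \<ge> real m - \<epsilon> m \<and>
             real (code_length c t m) - log 2 (real (card C))
               \<le> 8 * real t * log 2 (real (code_length c t m))
                   * log 2 (log 2 (real (code_length c t m)))))"
  proof (intro exI[of _ "\<lambda>_. 0"] conjI exI[of _ "28 * c + 4"] allI impI)
    show "(\<lambda>_. 0::real) \<longlonglongrightarrow> 0" by simp
    fix m :: nat assume mM: "28 * c + 4 \<le> m \<and> t < m"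
    define n where "n = code_length c t m"
    obtain C where C: "C \<subseteq> {x. length x = n}" "break_resilient t C"
      "2 ^ n \<le> (n + 1) ^ (2 * (t + 1)) * card C"
      using exists_code by blast
    define lm where "lm = log 2 (real m)"
    define ll where "ll = log 2 lm"
    define e where "e = real m + (6 + 2 * ll) * (3 * real c * lm) * real t + real c * lm"
    have ndef: "n = nat \<lceil>e\<rceil>" by (simp add: n_def code_length_def e_def lm_def ll_def)
    have rm: "real m \<ge> 28 * real c + 4" using mM by linarith
    have rc: "real c \<ge> 3" using assms by linarith
    have rt: "real t \<ge> 1" "real t \<le> real m" using t1 mM by auto
    have lm1: "lm \<ge> 1" unfolding lm_def using rm by simp
    have lmm: "lm \<le> real m"
    proof -
      have "real m < 2 ^ m" by (metis less_exp of_nat_less_iff of_nat_numeral of_nat_power)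
      hence "lm < log 2 (2 ^ m)" unfolding lm_def using rm by (intro log_less) auto
      thus ?thesis by simp
    qed
    have ll0: "ll \<ge> 0" unfolding ll_def using lm1 by simp
    have llm: "ll \<le> real m"
    proof -
      have "ll \<le> log 2 (real m)" unfolding ll_def using lm1 lmm by (intro log_mono) auto
      thus ?thesis using lmm lm_def by simp
    qed
    have elow: "e \<ge> real m + 54 * real t * lm"
    proof -
      have "(6 + 2 * ll) * (3 * real c * lm) * real t \<ge> 6 * (3 * 3 * lm) * real t"
        using ll0 lm1 rc rt by (intro mult_right_mono mult_mono) auto
      moreover have "real c * lm \<ge> 0" using lm1 by simp
      moreover have "6 * (3 * 3 * lm) * real t = 54 * real t * lm" by simp
      ultimately show ?thesis unfolding e_def by linarith
    qed
    have tl0: "real t * lm \<ge> 0" using lm1 rt by simp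
    have e0: "e \<ge> 0" using elow tl0 by linarith
    have nlow: "real n \<ge> e" unfolding ndef using e0 by linarith
    have nup: "real n \<le> e + 1" unfolding ndef using e0 by linarith
    have eup: "e \<le> real m + (6 + 2 * real m) * (3 * real c * real m) * real m + real c * real m"
    proof -
      have "(6 + 2 * ll) * (3 * real c * lm) * real t \<le> (6 + 2 * real m) * (3 * real c * real m) * real m"
        using ll0 lm1 rc rt llm lmm by (intro mult_mono) auto
      moreover have "real c * lm \<le> real c * real m" using lmm by (simp add: mult_left_mono)
      ultimately show ?thesis unfolding e_def by linarith
    qed
    have m4: "real n + 1 \<le> real m ^ 4"
    proof -
      define x where "x = real m"
      have x1: "x \<ge> 1" using rm x_def by simp
      have xx: "1 \<le> x * x" using mult_mono[of 1 x 1 x] x1 by linarith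
      have x3: "x ^ 3 = x * (x * x)" by (simp add: power3_eq_cube)
      have a1: "x \<le> x ^ 3" using mult_left_mono[of 1 "x * x" x] xx x1 x3 by simp
      have a2: "x * x \<le> x ^ 3" using mult_left_mono[of 1 x "x * x"] xx x1 x3 by (simp add: mult.commute)
      have a3: "1 \<le> x ^ 3" using a1 x1 by linarith
      note a = a1 a2 a3
      have "real n + 1 \<le> x + (6 + 2 * x) * (3 * real c * x) * x + real c * x + 2"
        unfolding x_def using nup eup by linarith
      also have "\<dots> = x + 18 * real c * (x * x) + 6 * real c * x ^ 3 + real c * x + 2"
        by (simp add: algebra_simps power3_eq_cube)
      also have "\<dots> \<le> real c * x ^ 3 + 18 * real c * x ^ 3 + 6 * real c * x ^ 3 + real c * x ^ 3 + real c * x ^ 3"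
      proof -
        have "x \<le> real c * x ^ 3" using a rc mult_right_mono[of 1 "real c" "x ^ 3"] by linarith
        moreover have "18 * real c * (x * x) \<le> 18 * real c * x ^ 3" using a rc by (intro mult_left_mono) auto
        moreover have "real c * x \<le> real c * x ^ 3" using a rc by (intro mult_left_mono) auto
        moreover have "2 \<le> real c * x ^ 3" using a rc mult_mono[of 3 "real c" 1 "x^3"] by linarith
        ultimately show ?thesis by linarith
      qed
      also have "\<dots> = 27 * real c * x ^ 3" by simp
      also have "\<dots> \<le> x * x ^ 3" using rm x_def a by (intro mult_right_mono) auto
      also have "\<dots> = x ^ 4" by (simp add: eval_nat_numeral)
      finally show ?thesis by (simp add: x_def)
    qed
    have logn1: "log 2 (real n + 1) \<le> 4 * lm"
    proof -
      have "log 2 (real n + 1) \<le> log 2 (real m ^ 4)" using m4 by (intro log_mono) auto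
      also have "\<dots> = 4 * lm" unfolding lm_def using rm by (subst log_nat_power) auto
      finally show ?thesis .
    qed
    have cpos: "card C > 0"
    proof (rule ccontr)
      assume "\<not> card C > 0"
      hence "card C = 0" by simp
      thus False using C(3) by simp
    qed
    have logC: "log 2 (real (card C)) \<ge> real n - 2 * (real t + 1) * log 2 (real n + 1)"
    proof -
      have "real (2 ^ n) \<le> real ((n + 1) ^ (2 * (t + 1)) * card C)" using C(3) by linarith
      hence "(2::real) ^ n \<le> (real n + 1) ^ (2 * (t + 1)) * real (card C)"
        by (simp only: of_nat_mult of_nat_power of_nat_add of_nat_1 of_nat_numeral)
      hence "log 2 ((2::real) ^ n) \<le> log 2 ((real n + 1) ^ (2 * (t + 1)) * real (card C))"
        by (intro log_mono) auto
      also have "\<dots> = log 2 ((real n + 1) ^ (2 * (t + 1))) + log 2 (real (card C))"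
        using cpos by (simp add: log_mult)
      also have "\<dots> = 2 * (real t + 1) * log 2 (real n + 1) + log 2 (real (card C))"
        by (subst log_nat_power) auto
      finally show ?thesis by simp
    qed
    have tlt: "2 * (real t + 1) * log 2 (real n + 1) \<le> 16 * real t * lm"
    proof -
      have "log 2 (real n + 1) \<ge> 0" by simp
      hence "2 * (real t + 1) * log 2 (real n + 1) \<le> 2 * (2 * real t) * log 2 (real n + 1)"
        using rt by (intro mult_right_mono) auto
      also have "\<dots> \<le> 2 * (2 * real t) * (4 * lm)" using logn1 rt by (intro mult_left_mono) auto
      finally show ?thesis by simp
    qed
    have lowfinal: "log 2 (real (card C)) \<ge> real m - 0"
      using logC tlt nlow elow tl0 by linarith
    have n4: "real n \<ge> 4" using nlow elow rm tl0 by linarith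
    have redund: "real n - log 2 (real (card C))
        \<le> 8 * real t * log 2 (real n) * log 2 (log 2 (real n))"
    proof -
      have ln2: "log 2 (real n) \<ge> 2"
        using n4 by (simp add: le_log_iff)
      have lln: "log 2 (log 2 (real n)) \<ge> 1" using ln2 by simp
      have "real n + 1 \<le> real n * real n" using n4 mult_right_mono[of 2 "real n" "real n"] by linarith
      hence "log 2 (real n + 1) \<le> log 2 (real n ^ 2)"
        using n4 by (intro log_mono) (auto simp: power2_eq_square)
      also have "\<dots> = 2 * log 2 (real n)" using n4 by (subst log_nat_power) auto
      finally have a: "log 2 (real n + 1) \<le> 2 * log 2 (real n)" .
      have "real n - log 2 (real (card C)) \<le> 2 * (real t + 1) * log 2 (real n + 1)" using logC by simp
      also have "\<dots> \<le> 2 * (2 * real t) * log 2 (real n + 1)"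
        using rt n4 by (intro mult_right_mono) auto
      also have "\<dots> \<le> 2 * (2 * real t) * (2 * log 2 (real n))" using a rt by (intro mult_left_mono) auto
      also have "\<dots> = 8 * real t * log 2 (real n) * 1" by simp
      also have "\<dots> \<le> 8 * real t * log 2 (real n) * log 2 (log 2 (real n))"
        using lln ln2 rt by (intro mult_left_mono) auto
      finally show ?thesis .
    qed
    show "\<exists>C::bool list set.
             C \<subseteq> {x. length x = code_length c t m} \<and>
             break_resilient t C \<and>
             log 2 (real (card C)) \<ge> real m - 0 \<and>
             real (code_length c t m) - log 2 (real (card C))
               \<le> 8 * real t * log 2 (real (code_length c t m))
                   * log 2 (log 2 (real (code_length c t m)))"
      unfolding n_def[symmetric] by (intro exI[of _ C] conjI; fact)
  qed
qed (simp)

end
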